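(* Consider the problem $\min_{x\in\mathbb R^n} f(x)$ subject to $Ax=b$, where $f:\mathbb R^n\to\mathbb R$ is convex and continuously differentiable, $A\in\mathbb R^{m\times n}$, $b\in\mathbb R^m$, and assume the KKT set $\Omega$ is nonempty. Let $\{(x_k,\lambda_k)\}_{k\ge0}$ be generated by the accelerated augmented Lagrangian method described in the context (in either Case I or Case II), and fix $(x^*,\lambda^* )\in\Omega$. Then: (i) $(\eta-\rho)\sum_{k=1}^{+\infty} t_{k+1}\big(\mathcal L_\beta(x_k,\lambda^* )-\mathcal L_\beta(x^*,\lambda^* )\big)<+\infty$ and $(1-\eta)\sum_{k=1}^{+\infty} t_{k+1}\|(x_{k+1},\lambda_{k+1})-(x_k,\lambda_k)\|_M^2<+\infty$. (ii) For all $k\ge1$, $\mathcal L_\beta(x_k,\lambda^* )-\mathcal L_\beta(x^*,\lambda^* )\le \mathcal E_1/t_k^2$, where $\mathcal E_1=\mathcal L_\beta(x_1,\lambda^* )-\mathcal L_\beta(x^*,\lambda^* )+\frac{\eta}{2\gamma}\|x_1-x^*\|^2+\frac{\eta}{2\delta}\|\lambda_1-\lambda^*\|^2$. (iii) The sequence $\{(x_k,\lambda_k)\}_{k\ge0}$ is bounded, and for all $k>1$, $\|(x_k,\lambda_k)-(x_{k-1},\lambda_{k-1})\|_M\le \frac{2\sqrt{2\mathcal E_1}}{t_k-1}$. (iv) There exists a constant $C>0$ such that for all $k\ge1$, $\|Ax_k-b\|\le C/t_k^2$ and $|f(x_k)-f(x^* )|\le \big(\mathcal E_1+\|\lambda^*\|C+\beta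 C^2/2\big)/t_k^2$.
   Context: The KKT set is $\Omega=\{(x^*,\lambda^* )\in\mathbb R^n\times\mathbb R^m: Ax^*=b,\ \nabla f(x^* )+A^\top\lambda^*=0\}$. For $\beta\ge0$, the augmented Lagrangian is $\mathcal L_\beta(x,\lambda)=f(x)+\langle\lambda,Ax-b\rangle+\frac\beta2\|Ax-b\|^2$. For $\gamma,\delta>0$ and $z=(x,\lambda)$, $\|z\|_M^2=\frac1\gamma\|x\|^2+\frac1\delta\|\lambda\|^2$ (i.e. $M=\mathrm{diag}(\gamma^{-1}I_n,\delta^{-1}I_m)$). Parameter sequence: $\{t_k\}_{k\ge1}$ is nondecreasing, $t_1=1$, $t_k>1$ for all $k>2$, $t_k\to+\infty$, and $t_{k+1}^2-t_k^2\le\rho t_{k+1}$ for all $k\ge 1$, with fixed $\rho\in(0,1]$. Fix $\eta\in[\rho,1]$, $\gamma>0$, $\delta>0$, $\beta\ge0$. Algorithm: initial points $x_0=x_1\in\mathbb R^n$, $\lambda_0=\lambda_1\in\mathbb R^m$. For $k=1,2,\dots$: set $\alpha_k=(t_{k+1}-\eta)/\eta$, $c_k=t_{k+1}/\eta$, $\bar x_k=x_k+\frac{t_k-1}{t_{k+1}}(x_k-x_{k-1})$, $\bar\lambda_k=\lambda_k+\frac{t_k-1}{t_{k+1}}(\lambda_k-\lambda_{k-1})$, $p_k=c_k\bar\lambda_k-\alpha_k\lambda_k$, $r_k=\alpha_kAx_k+b$. Case I ($f$ convex and $C^1$): $x_{k+1}=\arg\min_{x}\{f(x)+\frac\beta2\|Ax-b\|^2+\frac1{2\gamma}\|x-\bar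 x_k\|^2+\langle p_k,Ax-b\rangle+\frac\delta2\|c_kAx-r_k\|^2\}$. Case II ($f$ convex with $L$-Lipschitz gradient, and $\gamma\le 1/L$): $x_{k+1}=\arg\min_{x}\{\langle\nabla f(\bar x_k),x\rangle+\frac\beta2\|Ax-b\|^2+\frac1{2\gamma}\|x-\bar x_k\|^2+\langle p_k,Ax-b\rangle+\frac\delta2\|c_kAx-r_k\|^2\}$. Then $\lambda_{k+1}=\bar\lambda_k+\delta(c_kAx_{k+1}-r_k)$. *)

theory Defs
  imports "HOL-Analysis.Analysis"
begin

definition KKT_set :: "(real^'n \<Rightarrow> real^'n) \<Rightarrow> real^'n^'m \<Rightarrow> real^'m \<Rightarrow> ((real^'n) \<times> (real^'m)) set" where
  "KKT_set g A b = {(xs, ls). A *v xs = b \<and> g xs + transpose A *v ls = 0}"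

definition aug_lag :: "(real^'n \<Rightarrow> real) \<Rightarrow> real^'n^'m \<Rightarrow> real^'m \<Rightarrow> real \<Rightarrow> real^'n \<Rightarrow> real^'m \<Rightarrow> real" where
  "aug_lag f A b \<beta> x l = f x + l \<bullet> (A *v x - b) + \<beta> / 2 * (norm (A *v x - b))\<^sup>2"

definition M_norm :: "real \<Rightarrow> real \<Rightarrow> real^'n \<Rightarrow> real^'m \<Rightarrow> real" where
  "M_norm \<gamma> \<delta> x l = sqrt ((1 / \<gamma>) * (norm x)\<^sup>2 + (1 / \<delta>) * (norm l)\<^sup>2)"

text \<open>Objective of the x-subproblem, with smooth part F (F = f in Case I,
  F = linearization x \<mapsto> <grad f(xbar_k), x> in Case II).\<close>
definition sub_obj :: "(real^'n \<Rightarrow> real) \<Rightarrow> real^'n^'m \<Rightarrow> real^'m \<Rightarrow> real \<Rightarrow> real \<Rightarrow> real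
     \<Rightarrow> real^'n \<Rightarrow> real^'m \<Rightarrow> real \<Rightarrow> real^'m \<Rightarrow> real^'n \<Rightarrow> real" where
  "sub_obj F A b \<beta> \<gamma> \<delta> xb p c r x =
     F x + \<beta> / 2 * (norm (A *v x - b))\<^sup>2 + 1 / (2 * \<gamma>) * (norm (x - xb))\<^sup>2
     + p \<bullet> (A *v x - b) + \<delta> / 2 * (norm (c *\<^sub>R (A *v x) - r))\<^sup>2"

definition alpha_k :: "(nat \<Rightarrow> real) \<Rightarrow> real \<Rightarrow> nat \<Rightarrow> real" where
  "alpha_k t \<eta> k = (t (Suc k) - \<eta>) / \<eta>"

definition c_k :: "(nat \<Rightarrow> real) \<Rightarrow> real \<Rightarrow> nat \<Rightarrow> real" where
  "c_k t \<eta> k = t (Suc k) / \<eta>"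

definition extrap :: "(nat \<Rightarrow> real) \<Rightarrow> (nat \<Rightarrow> 'a::real_vector) \<Rightarrow> nat \<Rightarrow> 'a" where
  "extrap t z k = z k + ((t k - 1) / t (Suc k)) *\<^sub>R (z k - z (k - 1))"

definition p_k :: "(nat \<Rightarrow> real) \<Rightarrow> real \<Rightarrow> (nat \<Rightarrow> real^'m) \<Rightarrow> nat \<Rightarrow> real^'m" where
  "p_k t \<eta> l k = c_k t \<eta> k *\<^sub>R extrap t l k - alpha_k t \<eta> k *\<^sub>R l k"

definition r_k :: "(nat \<Rightarrow> real) \<Rightarrow> real \<Rightarrow> real^'n^'m \<Rightarrow> real^'m \<Rightarrow> (nat \<Rightarrow> real^'n) \<Rightarrow> nat \<Rightarrow> real^'m" where
  "r_k t \<eta> A b x k = alpha_k t \<eta> k *\<^sub>R (A *v x k) + b"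

end

theory Submission
  imports Defs
begin

lemma core:
  fixes e d p :: "'a::real_inner"
  shows "2 * inner (T *\<^sub>R p - (t-1) *\<^sub>R d) (\<eta> *\<^sub>R e + T *\<^sub>R p)
   = (norm (T *\<^sub>R p - (t-1) *\<^sub>R d))\<^sup>2 + (1-\<eta>)*(2*T-1)*(norm p)\<^sup>2
     + ((norm (\<eta> *\<^sub>R (e+p) + (T-1) *\<^sub>R p))\<^sup>2 + \<eta>*(1-\<eta>)*(norm (e+p))\<^sup>2)
     - ((norm (\<eta> *\<^sub>R e + (t-1) *\<^sub>R d))\<^sup>2 + \<eta>*(1-\<eta>)*(norm e)\<^sup>2)"
  unfolding power2_norm_eq_inner
  by (simp add: inner_add_left inner_add_right inner_diff_left inner_diff_right inner_commute algebra_simps power2_eq_square)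

lemma line_deriv:
  fixes f :: "'a::real_inner \<Rightarrow> real"
  assumes gd: "\<And>y. GDERIV f y :> g y"
  shows "((\<lambda>s. f (x + s *\<^sub>R d)) has_real_derivative inner (g (x + s *\<^sub>R d)) d) (at s)"
proof -
  have l: "((\<lambda>s. x + s *\<^sub>R d) has_derivative (\<lambda>s. s *\<^sub>R d)) (at s)"
    by (auto intro!: derivative_eq_intros)
  have "(f has_derivative (\<lambda>h. inner h (g (x + s *\<^sub>R d)))) (at (x + s *\<^sub>R d))"
    using gd[of "x + s *\<^sub>R d"] by (simp add: gderiv_def)
  from has_derivative_compose[OF l this]
  have "((\<lambda>s. f (x + s *\<^sub>R d)) has_derivative (\<lambda>h. inner (h *\<^sub>R d) (g (x + s *\<^sub>R d)))) (at s)"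
    by (simp add: o_def)
  moreover have "(\<lambda>h. inner (h *\<^sub>R d) (g (x + s *\<^sub>R d))) = (*) (inner (g (x + s *\<^sub>R d)) d)"
    by (auto simp: inner_commute)
  ultimately show ?thesis by (simp add: has_field_derivative_def)
qed

lemma grad_ineq:
  fixes f :: "'a::real_inner \<Rightarrow> real"
  assumes cvx: "convex_on UNIV f" and gd: "\<And>y. GDERIV f y :> g y"
  shows "f x + inner (g x) (y - x) \<le> f y"
proof -
  define \<phi> where "\<phi> s = f (x + s *\<^sub>R (y - x))" for s::real
  have cv: "convex_on UNIV \<phi>"
  proof (rule convex_onI)
    fix u a b :: real assume u: "u > 0" "u < 1"
    have "x + ((1 - u) *\<^sub>R a + u *\<^sub>R b) *\<^sub>R (y - x)
        = (1 - u) *\<^sub>R (x + a *\<^sub>R (y - x)) + u *\<^sub>R (x + b *\<^sub>R (y - x))"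
      by (simp add: algebra_simps)
    then show "\<phi> ((1 - u) *\<^sub>R a + u *\<^sub>R b) \<le> (1 - u) * \<phi> a + u * \<phi> b"
      unfolding \<phi>_def using convex_onD[OF cvx, of u] u by auto
  qed auto
  have d: "(\<phi> has_field_derivative inner (g x) (y - x)) (at 0 within UNIV)"
    using line_deriv[OF gd, of x "y - x" 0] by (simp add: \<phi>_def[abs_def])
  have "\<phi> 1 - \<phi> 0 \<ge> inner (g x) (y - x) * (1 - 0)"
    by (rule convex_on_imp_above_tangent[OF cv _ _ _ d]) auto
  then show ?thesis by (simp add: \<phi>_def)
qed

lemma descent:
  fixes f :: "'a::real_inner \<Rightarrow> real"
  assumes gd: "\<And>y. GDERIV f y :> g y"
    and lip: "\<And>u v. norm (g u - g v) \<le> L * norm (u - v)"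
  shows "f y \<le> f x + inner (g x) (y - x) + L / 2 * (norm (y - x))\<^sup>2"
proof -
  define d where "d = y - x"
  define \<psi> where "\<psi> s = f (x + s *\<^sub>R d) - s * inner (g x) d - L / 2 * s\<^sup>2 * (norm d)\<^sup>2" for s::real
  have "\<psi> 1 \<le> \<psi> 0"
  proof (rule DERIV_nonpos_imp_nonincreasing[of 0 1 \<psi>])
    fix s :: real assume s: "0 \<le> s" "s \<le> 1"
    have D: "(\<psi> has_real_derivative (inner (g (x + s *\<^sub>R d)) d - inner (g x) d - L * s * (norm d)\<^sup>2)) (at s)"
      unfolding \<psi>_def[abs_def]
      by (rule derivative_eq_intros line_deriv[OF gd] refl | simp)+
    have "inner (g (x + s *\<^sub>R d)) d - inner (g x) d = inner (g (x + s *\<^sub>R d) - g x) d"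
      by (simp add: inner_diff_left)
    also have "\<dots> \<le> norm (g (x + s *\<^sub>R d) - g x) * norm d" by (rule norm_cauchy_schwarz)
    also have "\<dots> \<le> L * norm (s *\<^sub>R d) * norm d"
      using lip[of "x + s *\<^sub>R d" x] by (simp add: mult_right_mono)
    also have "\<dots> = L * s * (norm d)\<^sup>2" using s by (simp add: power2_eq_square)
    finally show "\<exists>y. (\<psi> has_real_derivative y) (at s) \<and> y \<le> 0" using D by force
  qed auto
  then show ?thesis by (simp add: \<psi>_def d_def)
qed

lemma small_param:
  fixes a b c :: real
  assumes "\<And>\<theta>. 0 < \<theta> \<Longrightarrow> \<theta> \<le> 1 \<Longrightarrow> a \<le> b + \<theta> * c"
  shows "a \<le> b"
proof (rule ccontr)
  assume "\<not> a \<le> b"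
  define \<theta> where "\<theta> = min 1 ((a - b) / (2 * (\<bar>c\<bar> + 1)))"
  have p: "0 < \<theta>" "\<theta> \<le> 1" using \<open>\<not> a \<le> b\<close> by (auto simp: \<theta>_def)
  have "\<theta> * c \<le> \<theta> * (\<bar>c\<bar> + 1)" using p by (intro mult_left_mono) auto
  also have "\<dots> \<le> (a - b) / (2 * (\<bar>c\<bar> + 1)) * (\<bar>c\<bar> + 1)"
    by (intro mult_right_mono) (auto simp: \<theta>_def)
  also have "\<dots> = (a - b) / 2" by (simp add: field_simps)
  finally have "\<theta> * c \<le> (a - b) / 2" .
  moreover have "a \<le> b + \<theta> * c" using assms[OF p] .
  ultimately show False using \<open>\<not> a \<le> b\<close> by argo
qed

lemma norm_convex_comb:
  fixes a b :: "'a::real_inner"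
  shows "(norm ((1 - u) *\<^sub>R a + u *\<^sub>R b))\<^sup>2 = (1 - u) * (norm a)\<^sup>2 + u * (norm b)\<^sup>2 - u * (1 - u) * (norm (a - b))\<^sup>2"
  unfolding power2_norm_eq_inner
  by (simp add: inner_add_left inner_add_right inner_diff_left inner_diff_right inner_commute algebra_simps)

lemma three_point:
  fixes F :: "real^'n \<Rightarrow> real" and A :: "real^'n^'m" and b \<mu> :: "real^'m" and xb xp y :: "real^'n" and \<beta> \<gamma> K :: real
  defines "H \<equiv> \<lambda>y. F y + \<beta> / 2 * (norm (A *v y - b))\<^sup>2 + 1 / (2 * \<gamma>) * (norm (y - xb))\<^sup>2 + inner \<mu> (A *v y - b)"
  assumes cvx: "convex_on UNIV F" and be: "\<beta> \<ge> 0" and ga: "\<gamma> > 0"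
    and mn: "\<And>y. H xp \<le> H y + K * (norm (A *v (y - xp)))\<^sup>2"
  shows "H xp + 1 / (2 * \<gamma>) * (norm (y - xp))\<^sup>2 \<le> H y"
proof -
  define N where "N = (norm (y - xp))\<^sup>2"
  define M where "M = (norm (A *v (y - xp)))\<^sup>2"
  show ?thesis unfolding N_def[symmetric]
  proof (rule small_param[where c = "N / (2 * \<gamma>) + K * M"])
    fix \<theta> :: real assume th: "0 < \<theta>" "\<theta> \<le> 1"
    define z where "z = (1 - \<theta>) *\<^sub>R xp + \<theta> *\<^sub>R y"
    have zx: "z - xp = \<theta> *\<^sub>R (y - xp)" by (simp add: z_def algebra_simps)
    have m1: "H xp \<le> H z + K * (\<theta>\<^sup>2 * M)"
      using mn[of z] unfolding zx M_def
      by (simp add: matrix_vector_mult_scaleR power_mult_distrib)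
    have F1: "F z \<le> (1 - \<theta>) * F xp + \<theta> * F y"
      unfolding z_def using convex_onD[OF cvx, of \<theta> xp y] th by auto
    have rz: "A *v z - b = (1 - \<theta>) *\<^sub>R (A *v xp - b) + \<theta> *\<^sub>R (A *v y - b)"
      by (simp add: z_def matrix_vector_right_distrib matrix_vector_mult_scaleR algebra_simps)
    have R1: "(norm (A *v z - b))\<^sup>2 \<le> (1 - \<theta>) * (norm (A *v xp - b))\<^sup>2 + \<theta> * (norm (A *v y - b))\<^sup>2"
      unfolding rz norm_convex_comb using th by (simp add: mult_nonneg_nonneg)
    have Q1: "(norm (z - xb))\<^sup>2 = (1 - \<theta>) * (norm (xp - xb))\<^sup>2 + \<theta> * (norm (y - xb))\<^sup>2 - \<theta> * (1 - \<theta>) * N"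
    proof -
      have "z - xb = (1 - \<theta>) *\<^sub>R (xp - xb) + \<theta> *\<^sub>R (y - xb)" by (simp add: z_def algebra_simps)
      then have "(norm (z - xb))\<^sup>2 = (1 - \<theta>) * (norm (xp - xb))\<^sup>2 + \<theta> * (norm (y - xb))\<^sup>2 - \<theta> * (1 - \<theta>) * (norm ((xp - xb) - (y - xb)))\<^sup>2"
        by (simp only: norm_convex_comb)
      moreover have "norm ((xp - xb) - (y - xb)) = norm (y - xp)" by (simp add: norm_minus_commute)
      ultimately show ?thesis unfolding N_def by simp
    qed
    have L1: "inner \<mu> (A *v z - b) = (1 - \<theta>) * inner \<mu> (A *v xp - b) + \<theta> * inner \<mu> (A *v y - b)"
      unfolding rz by (simp add: inner_add_right)
    have Hz: "H z \<le> (1 - \<theta>) * H xp + \<theta> * H y - \<theta> * (1 - \<theta>) * N / (2 * \<gamma>)"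
    proof -
      have R2: "\<beta> / 2 * (norm (A *v z - b))\<^sup>2 \<le> (1 - \<theta>) * (\<beta> / 2 * (norm (A *v xp - b))\<^sup>2) + \<theta> * (\<beta> / 2 * (norm (A *v y - b))\<^sup>2)"
      proof -
        have "\<beta> / 2 * (norm (A *v z - b))\<^sup>2 \<le> \<beta> / 2 * ((1 - \<theta>) * (norm (A *v xp - b))\<^sup>2 + \<theta> * (norm (A *v y - b))\<^sup>2)"
          using R1 be by (intro mult_left_mono) auto
        also have "\<dots> = (1 - \<theta>) * (\<beta> / 2 * (norm (A *v xp - b))\<^sup>2) + \<theta> * (\<beta> / 2 * (norm (A *v y - b))\<^sup>2)"
          by (simp add: field_simps)
        finally show ?thesis .
      qed
      have Q2: "1 / (2 * \<gamma>) * (norm (z - xb))\<^sup>2 = (1 - \<theta>) * (1 / (2 * \<gamma>) * (norm (xp - xb))\<^sup>2) + \<theta> * (1 / (2 * \<gamma>) * (norm (y - xb))\<^sup>2) - \<theta> * (1 - \<theta>) * N / (2 * \<gamma>)"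
        unfolding Q1 by (simp add: algebra_simps add_divide_distrib diff_divide_distrib)
      have "H z \<le> ((1 - \<theta>) * F xp + \<theta> * F y) + ((1 - \<theta>) * (\<beta> / 2 * (norm (A *v xp - b))\<^sup>2) + \<theta> * (\<beta> / 2 * (norm (A *v y - b))\<^sup>2))
          + ((1 - \<theta>) * (1 / (2 * \<gamma>) * (norm (xp - xb))\<^sup>2) + \<theta> * (1 / (2 * \<gamma>) * (norm (y - xb))\<^sup>2) - \<theta> * (1 - \<theta>) * N / (2 * \<gamma>))
          + ((1 - \<theta>) * inner \<mu> (A *v xp - b) + \<theta> * inner \<mu> (A *v y - b))"
        unfolding H_def using F1 R2 Q2 L1 by linarith
      also have "\<dots> = (1 - \<theta>) * H xp + \<theta> * H y - \<theta> * (1 - \<theta>) * N / (2 * \<gamma>)"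
        unfolding H_def by (simp add: algebra_simps)
      finally show ?thesis .
    qed
    have "\<theta> * H xp \<le> \<theta> * H y - \<theta> * (1 - \<theta>) * N / (2 * \<gamma>) + \<theta> * (\<theta> * K * M)"
      using m1 Hz by (simp add: algebra_simps power2_eq_square)
    then have "\<theta> * (H xp + N / (2 * \<gamma>)) \<le> \<theta> * (H y + \<theta> * (N / (2 * \<gamma>) + K * M))"
      by (simp add: algebra_simps diff_divide_distrib add_divide_distrib)
    then show "H xp + 1 / (2 * \<gamma>) * N \<le> H y + \<theta> * (N / (2 * \<gamma>) + K * M)"
      using th by (simp add: mult_le_cancel_left_pos)
  qed
qed


lemma sub_obj_decomp:
  fixes A :: "real^'n^'m" and r :: "real^'m" and xp :: "real^'n" and c :: real
  defines "s0 \<equiv> c *\<^sub>R (A *v xp) - r"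
  shows "sub_obj F A b \<beta> \<gamma> \<delta> xb p c r y =
    (F y + \<beta> / 2 * (norm (A *v y - b))\<^sup>2 + 1 / (2 * \<gamma>) * (norm (y - xb))\<^sup>2 + inner (p + (\<delta> * c) *\<^sub>R s0) (A *v y - b))
    + \<delta> / 2 * c\<^sup>2 * (norm (A *v (y - xp)))\<^sup>2 + (\<delta> / 2 * (norm s0)\<^sup>2 - \<delta> * c * inner s0 (A *v xp - b))"
proof -
  have e: "c *\<^sub>R (A *v y) - r = c *\<^sub>R (A *v (y - xp)) + s0"
    by (simp add: s0_def matrix_vector_right_distrib algebra_simps matrix_vector_mult_diff_distrib)
  have n1: "(norm (c *\<^sub>R (A *v y) - r))\<^sup>2 = c\<^sup>2 * (norm (A *v (y - xp)))\<^sup>2 + 2 * c * inner (A *v (y - xp)) s0 + (norm s0)\<^sup>2"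
    unfolding e power2_norm_eq_inner
    by (simp add: inner_add_left inner_add_right inner_commute power2_eq_square algebra_simps)
  have n2: "inner (A *v (y - xp)) s0 = inner s0 (A *v y - b) - inner s0 (A *v xp - b)"
    by (simp add: matrix_vector_mult_diff_distrib inner_diff_left inner_diff_right inner_commute)
  show ?thesis
    unfolding sub_obj_def inner_add_left inner_scaleR_left n1 n2 by (simp add: field_simps)
qed

lemma tp_sub:
  fixes F :: "real^'n \<Rightarrow> real" and A :: "real^'n^'m"
  assumes cvx: "convex_on UNIV F" and be: "\<beta> \<ge> 0" and ga: "\<gamma> > 0"
    and mn: "\<And>y. sub_obj F A b \<beta> \<gamma> \<delta> xb p c r xp \<le> sub_obj F A b \<beta> \<gamma> \<delta> xb p c r y"
  shows "F xp + \<beta> / 2 * (norm (A *v xp - b))\<^sup>2 + 1 / (2 * \<gamma>) * (norm (xp - xb))\<^sup>2 + inner (p + (\<delta> * c) *\<^sub>R (c *\<^sub>R (A *v xp) - r)) (A *v xp - b)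
     + 1 / (2 * \<gamma>) * (norm (y - xp))\<^sup>2
     \<le> F y + \<beta> / 2 * (norm (A *v y - b))\<^sup>2 + 1 / (2 * \<gamma>) * (norm (y - xb))\<^sup>2 + inner (p + (\<delta> * c) *\<^sub>R (c *\<^sub>R (A *v xp) - r)) (A *v y - b)"
proof (rule three_point[OF cvx be ga, where K = "\<delta> / 2 * c\<^sup>2"])
  fix y
  show "F xp + \<beta> / 2 * (norm (A *v xp - b))\<^sup>2 + 1 / (2 * \<gamma>) * (norm (xp - xb))\<^sup>2 + inner (p + (\<delta> * c) *\<^sub>R (c *\<^sub>R (A *v xp) - r)) (A *v xp - b)
     \<le> F y + \<beta> / 2 * (norm (A *v y - b))\<^sup>2 + 1 / (2 * \<gamma>) * (norm (y - xb))\<^sup>2 + inner (p + (\<delta> * c) *\<^sub>R (c *\<^sub>R (A *v xp) - r)) (A *v y - b)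
       + \<delta> / 2 * c\<^sup>2 * (norm (A *v (y - xp)))\<^sup>2"
    using mn[of y] unfolding sub_obj_decomp[of F A b \<beta> \<gamma> \<delta> xb p c r _ xp] by simp
qed


lemma convex_inner_lin: "convex_on UNIV (\<lambda>z. inner (a::'a::real_inner) z)"
  by (rule convex_onI) (auto simp: inner_add_right)

lemma tpu:
  fixes f :: "real^'n \<Rightarrow> real" and A :: "real^'n^'m"
  assumes cvx: "convex_on UNIV f" and gd: "\<And>y. GDERIV f y :> g y"
    and be: "\<beta> \<ge> 0" and ga: "\<gamma> > 0"
    and cases: "(\<forall>y. sub_obj f A b \<beta> \<gamma> \<delta> xb p c r xp \<le> sub_obj f A b \<beta> \<gamma> \<delta> xb p c r y)
       \<or> (\<exists>L>0. (\<forall>u v. norm (g u - g v) \<le> L * norm (u - v)) \<and> \<gamma> \<le> 1 / L \<and>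
          (\<forall>y. sub_obj (\<lambda>z. g xb \<bullet> z) A b \<beta> \<gamma> \<delta> xb p c r xp \<le> sub_obj (\<lambda>z. g xb \<bullet> z) A b \<beta> \<gamma> \<delta> xb p c r y))"
  shows "f xp + \<beta> / 2 * (norm (A *v xp - b))\<^sup>2 + inner (p + (\<delta> * c) *\<^sub>R (c *\<^sub>R (A *v xp) - r)) (A *v xp - b)
     + 1 / (2 * \<gamma>) * (norm (y - xp))\<^sup>2
     \<le> f y + \<beta> / 2 * (norm (A *v y - b))\<^sup>2 + inner (p + (\<delta> * c) *\<^sub>R (c *\<^sub>R (A *v xp) - r)) (A *v y - b)
     + 1 / (2 * \<gamma>) * (norm (y - xb))\<^sup>2"
  using cases
proof
  assume H: "\<forall>y. sub_obj f A b \<beta> \<gamma> \<delta> xb p c r xp \<le> sub_obj f A b \<beta> \<gamma> \<delta> xb p c r y"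
  note X = tp_sub[OF cvx be ga, of A b \<delta> xb p c r xp y, OF H[rule_format]]
  have "0 \<le> 1 / (2 * \<gamma>) * (norm (xp - xb))\<^sup>2" using ga by simp
  then show ?thesis using X by linarith
next
  assume "\<exists>L>0. (\<forall>u v. norm (g u - g v) \<le> L * norm (u - v)) \<and> \<gamma> \<le> 1 / L \<and>
          (\<forall>y. sub_obj (\<lambda>z. g xb \<bullet> z) A b \<beta> \<gamma> \<delta> xb p c r xp \<le> sub_obj (\<lambda>z. g xb \<bullet> z) A b \<beta> \<gamma> \<delta> xb p c r y)"
  then obtain L where L: "L > 0" "\<And>u v. norm (g u - g v) \<le> L * norm (u - v)" "\<gamma> \<le> 1 / L"
    and mn: "\<And>y. sub_obj (\<lambda>z. g xb \<bullet> z) A b \<beta> \<gamma> \<delta> xb p c r xp \<le> sub_obj (\<lambda>z. g xb \<bullet> z) A b \<beta> \<gamma> \<delta> xb p c r y"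
    by blast
  have T: "inner (g xb) xp + \<beta> / 2 * (norm (A *v xp - b))\<^sup>2 + 1 / (2 * \<gamma>) * (norm (xp - xb))\<^sup>2 + inner (p + (\<delta> * c) *\<^sub>R (c *\<^sub>R (A *v xp) - r)) (A *v xp - b)
     + 1 / (2 * \<gamma>) * (norm (y - xp))\<^sup>2
     \<le> inner (g xb) y + \<beta> / 2 * (norm (A *v y - b))\<^sup>2 + 1 / (2 * \<gamma>) * (norm (y - xb))\<^sup>2 + inner (p + (\<delta> * c) *\<^sub>R (c *\<^sub>R (A *v xp) - r)) (A *v y - b)"
    by (rule tp_sub[OF convex_inner_lin be ga mn])
  have g1: "f xb + inner (g xb) (y - xb) \<le> f y" by (rule grad_ineq[OF cvx gd])
  have g2: "f xp \<le> f xb + inner (g xb) (xp - xb) + L / 2 * (norm (xp - xb))\<^sup>2"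
    by (rule descent[OF gd L(2)])
  have "L \<le> 1 / \<gamma>" using L ga by (simp add: field_simps)
  then have g3: "L / 2 * (norm (xp - xb))\<^sup>2 \<le> 1 / (2 * \<gamma>) * (norm (xp - xb))\<^sup>2"
    by (intro mult_right_mono) auto
  show ?thesis using T g1 g2 g3 by (simp add: inner_diff_right)
qed


lemma quadX:
  fixes e d p :: "'a::real_inner"
  shows "(T\<^sup>2 - \<eta> * T) * ((norm (- (a *\<^sub>R d)))\<^sup>2 - (norm (- p))\<^sup>2) + \<eta> * T * ((norm (- (e + a *\<^sub>R d)))\<^sup>2 - (norm (- (e + p)))\<^sup>2)
     = (norm (T *\<^sub>R p - (a * T) *\<^sub>R d))\<^sup>2 - 2 * inner (T *\<^sub>R p - (a * T) *\<^sub>R d) (\<eta> *\<^sub>R e + T *\<^sub>R p)"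
  unfolding norm_minus_cancel power2_norm_eq_inner
  by (simp add: inner_add_left inner_add_right inner_diff_left inner_diff_right inner_commute algebra_simps power2_eq_square)

definition phi :: "(real^'n \<Rightarrow> real) \<Rightarrow> real^'n^'m \<Rightarrow> real^'m \<Rightarrow> real \<Rightarrow> real^'n \<Rightarrow> real^'m \<Rightarrow> real^'n \<Rightarrow> real" where
  "phi f A b \<beta> xs ls y = f y - f xs + inner ls (A *v y - b) + \<beta> / 2 * (norm (A *v y - b))\<^sup>2"

definition PP :: "real \<Rightarrow> real \<Rightarrow> 'a::real_inner \<Rightarrow> 'a \<Rightarrow> 'a \<Rightarrow> real" where
  "PP \<eta> t zs z zm = (norm (\<eta> *\<^sub>R (z - zs) + (t - 1) *\<^sub>R (z - zm)))\<^sup>2 + \<eta> * (1 - \<eta>) * (norm (z - zs))\<^sup>2"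

lemma core_PP:
  fixes zs z zm zp :: "'a::real_inner"
  shows "2 * inner (T *\<^sub>R (zp - z) - (t-1) *\<^sub>R (z - zm)) (\<eta> *\<^sub>R (z - zs) + T *\<^sub>R (zp - z))
   = (norm (T *\<^sub>R (zp - z) - (t-1) *\<^sub>R (z - zm)))\<^sup>2 + (1-\<eta>)*(2*T-1)*(norm (zp - z))\<^sup>2
     + PP \<eta> T zs zp z - PP \<eta> t zs z zm"
proof -
  have "zp - zs = (z - zs) + (zp - z)" by simp
  then show ?thesis unfolding PP_def using core[of T "zp - z" t "z - zm" \<eta> "z - zs"]
    by (simp only:)
qed


lemma step:
  fixes f :: "real^'n \<Rightarrow> real" and A :: "real^'n^'m" and b ls lp l lm \<mu> :: "real^'m"
    and x xm xp xs xb :: "real^'n" and t T \<eta> \<rho> \<gamma> \<delta> \<beta> :: real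
  assumes tp: "\<And>y. f xp + \<beta> / 2 * (norm (A *v xp - b))\<^sup>2 + inner \<mu> (A *v xp - b) + 1 / (2 * \<gamma>) * (norm (y - xp))\<^sup>2
     \<le> f y + \<beta> / 2 * (norm (A *v y - b))\<^sup>2 + inner \<mu> (A *v y - b) + 1 / (2 * \<gamma>) * (norm (y - xb))\<^sup>2"
    and mu: "\<mu> = (T / \<eta>) *\<^sub>R lp - ((T - \<eta>) / \<eta>) *\<^sub>R l"
    and xbd: "xb = x + ((t - 1) / T) *\<^sub>R (x - xm)"
    and lpd: "lp - (l + ((t - 1) / T) *\<^sub>R (l - lm)) = \<delta> *\<^sub>R ((T / \<eta>) *\<^sub>R (A *v xp) - (((T - \<eta>) / \<eta>) *\<^sub>R (A *v x) + b))"
    and Axs: "A *v xs = b"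
    and Phx: "phi f A b \<beta> xs ls x \<ge> 0"
    and T1: "T \<ge> 1" and rate: "T\<^sup>2 - t\<^sup>2 \<le> \<rho> * T" and rh: "\<rho> \<le> \<eta>" and et: "\<eta> \<le> 1" "\<eta> > 0"
    and ga: "\<gamma> > 0" and de: "\<delta> > 0"
  shows "T\<^sup>2 * phi f A b \<beta> xs ls xp + (PP \<eta> T xs xp x / \<gamma> + PP \<eta> T ls lp l / \<delta>) / 2
     + (\<eta> - \<rho>) * T * phi f A b \<beta> xs ls x + (1 - \<eta>) * T / 2 * ((norm (xp - x))\<^sup>2 / \<gamma> + (norm (lp - l))\<^sup>2 / \<delta>)
     \<le> t\<^sup>2 * phi f A b \<beta> xs ls x + (PP \<eta> t xs x xm / \<gamma> + PP \<eta> t ls l lm / \<delta>) / 2"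
proof -
  define w1 where "w1 = T\<^sup>2 - \<eta> * T"
  define w2 where "w2 = \<eta> * T"
  define gi where "gi = 1 / (2 * \<gamma>)"
  define di where "di = 1 / (2 * \<delta>)"
  define Fp where "Fp = f xp + \<beta> / 2 * (norm (A *v xp - b))\<^sup>2 + inner \<mu> (A *v xp - b)"
  define Gx where "Gx = f x + \<beta> / 2 * (norm (A *v x - b))\<^sup>2 + inner \<mu> (A *v x - b)"
  define fs where "fs = f xs"
  define nxp where "nxp = (norm (x - xp))\<^sup>2"
  define nxb where "nxb = (norm (x - xb))\<^sup>2"
  define nsp where "nsp = (norm (xs - xp))\<^sup>2"
  define nsb where "nsb = (norm (xs - xb))\<^sup>2"
  define np where "np = (norm (xp - x))\<^sup>2"
  define nl where "nl = (norm (lp - l))\<^sup>2"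
  define Px1 where "Px1 = PP \<eta> T xs xp x"
  define Px0 where "Px0 = PP \<eta> t xs x xm"
  define Pl1 where "Pl1 = PP \<eta> T ls lp l"
  define Pl0 where "Pl0 = PP \<eta> t ls l lm"
  define Pxp where "Pxp = phi f A b \<beta> xs ls xp"
  define Pxx where "Pxx = phi f A b \<beta> xs ls x"
  define mrp where "mrp = inner (\<mu> - ls) (A *v xp - b)"
  define mrx where "mrx = inner (\<mu> - ls) (A *v x - b)"
  have Tpos: "T > 0" using T1 by simp
  have w1nn: "w1 \<ge> 0" unfolding w1_def using T1 et by (simp add: power2_eq_square mult_right_mono)
  have w2nn: "w2 \<ge> 0" unfolding w2_def using T1 et by simp
  have TPx: "Fp + gi * nxp \<le> Gx + gi * nxb"
    using tp[of x] unfolding Fp_def Gx_def gi_def nxp_def nxb_def by (simp add: norm_minus_commute)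
  have TPs: "Fp + gi * nsp \<le> fs + gi * nsb"
    using tp[of xs] unfolding Fp_def fs_def gi_def nsp_def nsb_def Axs by simp
  have I1: "w1 * Fp + w1 * gi * nxp \<le> w1 * Gx + w1 * gi * nxb"
    using mult_left_mono[OF TPx w1nn] by (simp add: algebra_simps)
  have I2: "w2 * Fp + w2 * gi * nsp \<le> w2 * fs + w2 * gi * nsb"
    using mult_left_mono[OF TPs w2nn] by (simp add: algebra_simps)
  have QX: "w1 * nxb - w1 * nxp + w2 * nsb - w2 * nsp = Px0 - Px1 - (1 - \<eta>) * (2 * T - 1) * np"
  proof -
    have aT: "(t - 1) / T * T = t - 1" using Tpos by simp
    have q: "w1 * (nxb - nxp) + w2 * (nsb - nsp)
       = (norm (T *\<^sub>R (xp - x) - (t - 1) *\<^sub>R (x - xm)))\<^sup>2 - 2 * inner (T *\<^sub>R (xp - x) - (t - 1) *\<^sub>R (x - xm)) (\<eta> *\<^sub>R (x - xs) + T *\<^sub>R (xp - x))"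
    proof -
      have e1: "x - xb = - (((t - 1) / T) *\<^sub>R (x - xm))" by (simp add: xbd)
      have e2: "x - xp = - (xp - x)" by simp
      have e3: "xs - xb = - ((x - xs) + ((t - 1) / T) *\<^sub>R (x - xm))" by (simp add: xbd)
      have e4: "xs - xp = - ((x - xs) + (xp - x))" by simp
      show ?thesis unfolding w1_def w2_def nxb_def nxp_def nsb_def nsp_def e1 e2 e3 e4
        using quadX[of T \<eta> "(t - 1) / T" "x - xm" "xp - x" "x - xs"] unfolding aT by simp
    qed
    show ?thesis using q core_PP[of T xp x t xm \<eta> xs] unfolding Px0_def Px1_def np_def
      by (simp add: algebra_simps)
  qed
  have QXg: "w1 * gi * nxb - w1 * gi * nxp + w2 * gi * nsb - w2 * gi * nsp = gi * Px0 - gi * Px1 - gi * ((1 - \<eta>) * (2 * T - 1) * np)"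
    using arg_cong[OF QX, of "\<lambda>z. gi * z"] by (simp add: algebra_simps)
  have FpE: "Fp = Pxp + fs + mrp"
    unfolding Fp_def Pxp_def fs_def mrp_def phi_def by (simp add: inner_diff_left)
  have GxE: "Gx = Pxx + fs + mrx"
    unfolding Gx_def Pxx_def fs_def mrx_def phi_def by (simp add: inner_diff_left)
  have c1: "\<eta> * T * (T / \<eta>) = T\<^sup>2" using et by (simp add: power2_eq_square)
  have c2: "\<eta> * T * ((T - \<eta>) / \<eta>) = w1" using et by (simp add: w1_def power2_eq_square field_simps)
  have dual: "T\<^sup>2 * mrp - w1 * mrx \<ge> di * ((1 - \<eta>) * (2 * T - 1) * nl + Pl1 - Pl0)"
  proof -
    have v1: "T\<^sup>2 *\<^sub>R (A *v xp - b) - w1 *\<^sub>R (A *v x - b) = (\<eta> * T / \<delta>) *\<^sub>R (lp - (l + ((t - 1) / T) *\<^sub>R (l - lm)))"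
    proof -
      have "(\<eta> * T / \<delta>) *\<^sub>R (lp - (l + ((t - 1) / T) *\<^sub>R (l - lm)))
          = (\<eta> * T) *\<^sub>R ((T / \<eta>) *\<^sub>R (A *v xp) - (((T - \<eta>) / \<eta>) *\<^sub>R (A *v x) + b))"
        unfolding lpd using de by simp
      also have "\<dots> = (\<eta> * T * (T / \<eta>)) *\<^sub>R (A *v xp) - ((\<eta> * T * ((T - \<eta>) / \<eta>)) *\<^sub>R (A *v x) + (\<eta> * T) *\<^sub>R b)"
        by (simp only: scaleR_diff_right scaleR_add_right scaleR_scaleR)
      also have "\<dots> = T\<^sup>2 *\<^sub>R (A *v xp) - w1 *\<^sub>R (A *v x) - (\<eta> * T) *\<^sub>R b"
        unfolding c1 c2 by simp
      also have "\<dots> = T\<^sup>2 *\<^sub>R (A *v xp - b) - w1 *\<^sub>R (A *v x - b)"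
        by (simp add: w1_def algebra_simps)
      finally show ?thesis by simp
    qed
    have v2: "(\<eta> * T) *\<^sub>R (\<mu> - ls) = T *\<^sub>R (\<eta> *\<^sub>R (l - ls) + T *\<^sub>R (lp - l))"
    proof -
      have "(\<eta> * T) *\<^sub>R (\<mu> - ls) = (\<eta> * T * (T / \<eta>)) *\<^sub>R lp - (\<eta> * T * ((T - \<eta>) / \<eta>)) *\<^sub>R l - (\<eta> * T) *\<^sub>R ls"
        unfolding mu by (simp only: scaleR_diff_right scaleR_scaleR)
      then have "(\<eta> * T) *\<^sub>R (\<mu> - ls) = T\<^sup>2 *\<^sub>R lp - w1 *\<^sub>R l - (\<eta> * T) *\<^sub>R ls"
        unfolding c1 c2 .
      then show ?thesis by (simp add: w1_def algebra_simps power2_eq_square)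
    qed
    have v3: "T *\<^sub>R (lp - (l + ((t - 1) / T) *\<^sub>R (l - lm))) = T *\<^sub>R (lp - l) - (t - 1) *\<^sub>R (l - lm)"
      using Tpos by (simp add: scaleR_diff_right scaleR_add_right)
    have "T\<^sup>2 * mrp - w1 * mrx = inner (\<mu> - ls) (T\<^sup>2 *\<^sub>R (A *v xp - b) - w1 *\<^sub>R (A *v x - b))"
      unfolding mrp_def mrx_def by (simp add: inner_diff_right)
    also have "\<dots> = 1 / \<delta> * inner ((\<eta> * T) *\<^sub>R (\<mu> - ls)) (lp - (l + ((t - 1) / T) *\<^sub>R (l - lm)))"
      unfolding v1 inner_scaleR_left inner_scaleR_right by simp
    also have "\<dots> = 1 / \<delta> * inner (\<eta> *\<^sub>R (l - ls) + T *\<^sub>R (lp - l)) (T *\<^sub>R (lp - l) - (t - 1) *\<^sub>R (l - lm))"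
      unfolding v2 v3[symmetric] inner_scaleR_left inner_scaleR_right by simp
    also have "\<dots> = di * ((norm (T *\<^sub>R (lp - l) - (t-1) *\<^sub>R (l - lm)))\<^sup>2 + (1-\<eta>)*(2*T-1)*nl + Pl1 - Pl0)"
    proof -
      have cp: "inner (\<eta> *\<^sub>R (l - ls) + T *\<^sub>R (lp - l)) (T *\<^sub>R (lp - l) - (t - 1) *\<^sub>R (l - lm))
         = ((norm (T *\<^sub>R (lp - l) - (t-1) *\<^sub>R (l - lm)))\<^sup>2 + (1-\<eta>)*(2*T-1)*nl + Pl1 - Pl0) / 2"
      proof -
        have gen: "\<And>X Y :: real. 2 * X = Y \<Longrightarrow> X = Y / 2" by simp
        show ?thesis by (subst inner_commute, rule gen, rule core_PP[of T lp l t lm \<eta> ls, unfolded nl_def[symmetric] Pl1_def[symmetric] Pl0_def[symmetric]])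
      qed
      show ?thesis unfolding cp di_def by simp
    qed
    also have "\<dots> \<ge> di * ((1 - \<eta>) * (2 * T - 1) * nl + Pl1 - Pl0)"
      unfolding di_def using de by (intro mult_left_mono) auto
    finally show ?thesis .
  qed
  have sumw: "w1 + w2 = T\<^sup>2" unfolding w1_def w2_def by simp
  have F1: "w1 * Fp + w2 * Fp = T\<^sup>2 * Pxp + T\<^sup>2 * fs + T\<^sup>2 * mrp"
    unfolding FpE sumw[symmetric] by (simp add: algebra_simps)
  have F2: "w1 * Gx = w1 * Pxx + w1 * fs + w1 * mrx" unfolding GxE by (simp add: algebra_simps)
  have F3: "T\<^sup>2 * fs = w1 * fs + w2 * fs" unfolding sumw[symmetric] by (simp add: algebra_simps)
  have D1: "di * ((1 - \<eta>) * (2 * T - 1) * nl + Pl1 - Pl0) = di * ((1 - \<eta>) * (2 * T - 1) * nl) + di * Pl1 - di * Pl0"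
    by (simp add: algebra_simps)
  have F4: "w1 * Pxx + (\<eta> - \<rho>) * T * Pxx \<le> t\<^sup>2 * Pxx"
  proof -
    have "w1 + (\<eta> - \<rho>) * T \<le> t\<^sup>2" unfolding w1_def using rate by (simp add: algebra_simps)
    from mult_right_mono[OF this Phx[folded Pxx_def]] show ?thesis by (simp add: algebra_simps)
  qed
  have F5: "gi * ((1 - \<eta>) * (2 * T - 1) * np) \<ge> (1 - \<eta>) * T * gi * np"
  proof -
    have "(1 - \<eta>) * T * gi * np = gi * ((1 - \<eta>) * np) * T" by (simp add: algebra_simps)
    also have "\<dots> \<le> gi * ((1 - \<eta>) * np) * (2 * T - 1)"
      using T1 et ga unfolding gi_def np_def by (intro mult_left_mono) auto
    finally show ?thesis by (simp add: algebra_simps)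
  qed
  have F6: "di * ((1 - \<eta>) * (2 * T - 1) * nl) \<ge> (1 - \<eta>) * T * di * nl"
  proof -
    have "(1 - \<eta>) * T * di * nl = di * ((1 - \<eta>) * nl) * T" by (simp add: algebra_simps)
    also have "\<dots> \<le> di * ((1 - \<eta>) * nl) * (2 * T - 1)"
      using T1 et de unfolding di_def nl_def by (intro mult_left_mono) auto
    finally show ?thesis by (simp add: algebra_simps)
  qed
  have G: "T\<^sup>2 * Pxp + gi * Px1 + di * Pl1 + (\<eta> - \<rho>) * T * Pxx + (1 - \<eta>) * T * gi * np + (1 - \<eta>) * T * di * nl
      \<le> t\<^sup>2 * Pxx + gi * Px0 + di * Pl0"
    using I1 I2 QXg F1 F2 F3 D1 F4 F5 F6 dual by linarith
  have L: "T\<^sup>2 * Pxp + (Px1 / \<gamma> + Pl1 / \<delta>) / 2 + (\<eta> - \<rho>) * T * Pxx + (1 - \<eta>) * T / 2 * (np / \<gamma> + nl / \<delta>)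
     = T\<^sup>2 * Pxp + gi * Px1 + di * Pl1 + (\<eta> - \<rho>) * T * Pxx + (1 - \<eta>) * T * gi * np + (1 - \<eta>) * T * di * nl"
    unfolding gi_def di_def using ga de by (simp add: field_simps)
  have R: "t\<^sup>2 * Pxx + (Px0 / \<gamma> + Pl0 / \<delta>) / 2 = t\<^sup>2 * Pxx + gi * Px0 + di * Pl0"
    unfolding gi_def di_def using ga de by (simp add: field_simps)
  show ?thesis using G unfolding L[unfolded Pxp_def Px1_def Pl1_def Pxx_def np_def nl_def, symmetric]
    R[unfolded Pxx_def Px0_def Pl0_def, symmetric] Pxp_def Px1_def Pl1_def Pxx_def np_def nl_def Px0_def Pl0_def .
qed


definition scl :: "real \<Rightarrow> real \<Rightarrow> 'a::real_normed_vector \<Rightarrow> 'b::real_normed_vector \<Rightarrow> 'a \<times> 'b" where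
  "scl \<gamma> \<delta> a b = ((1 / sqrt \<gamma>) *\<^sub>R a, (1 / sqrt \<delta>) *\<^sub>R b)"

lemma scl_norm2:
  assumes "\<gamma> > 0" "\<delta> > 0"
  shows "(norm (scl \<gamma> \<delta> a b))\<^sup>2 = (norm a)\<^sup>2 / \<gamma> + (norm b)\<^sup>2 / \<delta>"
  using assms by (simp add: scl_def norm_Pair power_mult_distrib power_divide)

lemma M_norm_scl:
  assumes "\<gamma> > 0" "\<delta> > 0"
  shows "M_norm \<gamma> \<delta> a b = norm (scl \<gamma> \<delta> a b)"
proof -
  have "norm (scl \<gamma> \<delta> a b) = sqrt ((norm (scl \<gamma> \<delta> a b))\<^sup>2)" by simp
  then show ?thesis unfolding M_norm_def scl_norm2[OF assms] by (simp add: divide_inverse mult.commute)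
qed

lemma scl_lin:
  "scl \<gamma> \<delta> (u *\<^sub>R a + v *\<^sub>R a') (u *\<^sub>R b + v *\<^sub>R b') = u *\<^sub>R scl \<gamma> \<delta> a b + v *\<^sub>R scl \<gamma> \<delta> a' b'"
  "scl \<gamma> \<delta> (a - a') (b - b') = scl \<gamma> \<delta> a b - scl \<gamma> \<delta> a' b'"
  "scl \<gamma> \<delta> (a + a') (b + b') = scl \<gamma> \<delta> a b + scl \<gamma> \<delta> a' b'"
  "scl \<gamma> \<delta> (u *\<^sub>R a) (u *\<^sub>R b) = u *\<^sub>R scl \<gamma> \<delta> a b"
  by (simp_all add: scl_def algebra_simps)

lemma PP_scl:
  fixes xs x xm :: "'a::real_inner" and ls l lm :: "'b::real_inner"
  assumes "\<gamma> > 0" "\<delta> > 0"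
  shows "PP \<eta> t (scl \<gamma> \<delta> xs ls) (scl \<gamma> \<delta> x l) (scl \<gamma> \<delta> xm lm) = PP \<eta> t xs x xm / \<gamma> + PP \<eta> t ls l lm / \<delta>"
proof -
  have e1: "\<eta> *\<^sub>R (scl \<gamma> \<delta> x l - scl \<gamma> \<delta> xs ls) + (t - 1) *\<^sub>R (scl \<gamma> \<delta> x l - scl \<gamma> \<delta> xm lm)
     = scl \<gamma> \<delta> (\<eta> *\<^sub>R (x - xs) + (t - 1) *\<^sub>R (x - xm)) (\<eta> *\<^sub>R (l - ls) + (t - 1) *\<^sub>R (l - lm))"
    by (simp add: scl_lin)
  have e2: "scl \<gamma> \<delta> x l - scl \<gamma> \<delta> xs ls = scl \<gamma> \<delta> (x - xs) (l - ls)" by (simp add: scl_lin)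
  show ?thesis unfolding PP_def unfolding e1 unfolding e2 scl_norm2[OF assms] using assms by (simp add: field_simps)
qed

lemma PP_nonneg: "0 \<le> \<eta> \<Longrightarrow> \<eta> \<le> 1 \<Longrightarrow> PP \<eta> t zs z zm \<ge> 0"
  unfolding PP_def by simp

lemma PP_one: "PP \<eta> 1 zs z zm = \<eta> * (norm (z - zs))\<^sup>2"
proof -
  have "PP \<eta> 1 zs z zm = (norm (\<eta> *\<^sub>R (z - zs)))\<^sup>2 + \<eta> * (1 - \<eta>) * (norm (z - zs))\<^sup>2"
    by (simp add: PP_def)
  also have "\<dots> = \<eta>\<^sup>2 * (norm (z - zs))\<^sup>2 + \<eta> * (1 - \<eta>) * (norm (z - zs))\<^sup>2"
    by (simp add: power_mult_distrib)
  finally show ?thesis by (simp add: algebra_simps power2_eq_square)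
qed

lemma resid_rec:
  fixes A :: "real^'n^'m" and b lp l lm :: "real^'m" and xp x :: "real^'n"
  assumes lpd: "lp - (l + ((t - 1) / T) *\<^sub>R (l - lm)) = \<delta> *\<^sub>R ((T / \<eta>) *\<^sub>R (A *v xp) - (((T - \<eta>) / \<eta>) *\<^sub>R (A *v x) + b))"
    and T: "T > 0" and et: "\<eta> > 0" and de: "\<delta> > 0"
  shows "T\<^sup>2 *\<^sub>R (A *v xp - b) = (T\<^sup>2 - \<eta> * T) *\<^sub>R (A *v x - b)
     + (\<eta> / \<delta>) *\<^sub>R (((T - 1) *\<^sub>R (lp - l) + lp) - ((t - 1) *\<^sub>R (l - lm) + l))"
proof -
  have c1: "\<eta> * T * (T / \<eta>) = T\<^sup>2" using et by (simp add: power2_eq_square)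
  have c2: "\<eta> * T * ((T - \<eta>) / \<eta>) = T\<^sup>2 - \<eta> * T" using et by (simp add: power2_eq_square field_simps)
  have v3: "((T - 1) *\<^sub>R (lp - l) + lp) - ((t - 1) *\<^sub>R (l - lm) + l) = T *\<^sub>R (lp - (l + ((t - 1) / T) *\<^sub>R (l - lm)))"
  proof -
    define c where "c = (t - 1) / T"
    have tc: "t - 1 = T * c" unfolding c_def using T by simp
    show ?thesis unfolding c_def[symmetric] tc by (simp add: algebra_simps)
  qed
  have "(\<eta> / \<delta>) *\<^sub>R (((T - 1) *\<^sub>R (lp - l) + lp) - ((t - 1) *\<^sub>R (l - lm) + l))
      = (\<eta> * T) *\<^sub>R ((T / \<eta>) *\<^sub>R (A *v xp) - (((T - \<eta>) / \<eta>) *\<^sub>R (A *v x) + b))"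
    unfolding v3 lpd using de by simp
  also have "\<dots> = (\<eta> * T * (T / \<eta>)) *\<^sub>R (A *v xp) - ((\<eta> * T * ((T - \<eta>) / \<eta>)) *\<^sub>R (A *v x) + (\<eta> * T) *\<^sub>R b)"
    by (simp only: scaleR_diff_right scaleR_add_right scaleR_scaleR)
  also have "\<dots> = T\<^sup>2 *\<^sub>R (A *v xp) - ((T\<^sup>2 - \<eta> * T) *\<^sub>R (A *v x) + (\<eta> * T) *\<^sub>R b)"
    unfolding c1 c2 ..
  finally show ?thesis by (simp add: algebra_simps)
qed

lemma t_ge1:
  assumes t1: "t 1 = 1" and t_mono: "\<And>k. k \<ge> 1 \<Longrightarrow> t k \<le> t (Suc k)" and k: "k \<ge> 1"
  shows "t k \<ge> (1::real)"
  using k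
proof (induction k rule: dec_induct)
  case base then show ?case using t1 by simp
next
  case (step k) then show ?case using t_mono[of k] by linarith
qed

theorem theorem4p1:
  fixes f :: "real^'n \<Rightarrow> real" and g :: "real^'n \<Rightarrow> real^'n"
    and A :: "real^'n^'m" and b :: "real^'m"
    and t :: "nat \<Rightarrow> real" and \<rho> \<eta> \<gamma> \<delta> \<beta> :: real
    and x :: "nat \<Rightarrow> real^'n" and l :: "nat \<Rightarrow> real^'m"
    and xs :: "real^'n" and ls :: "real^'m"
  assumes f_convex: "convex_on UNIV f"
    and f_grad: "\<And>y. GDERIV f y :> g y"
    and g_cont: "continuous_on UNIV g"
    and Omega_ne: "KKT_set g A b \<noteq> {}"
    and t1: "t 1 = 1"
    and t_mono: "\<And>k. k \<ge> 1 \<Longrightarrow> t k \<le> t (Suc k)"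
    and t_gt: "\<And>k. k > 2 \<Longrightarrow> t k > 1"
    and t_lim: "filterlim t at_top sequentially"
    and t_rate: "\<And>k. k \<ge> 1 \<Longrightarrow> (t (Suc k))\<^sup>2 - (t k)\<^sup>2 \<le> \<rho> * t (Suc k)"
    and rho: "0 < \<rho>" "\<rho> \<le> 1"
    and eta: "\<rho> \<le> \<eta>" "\<eta> \<le> 1"
    and params: "\<gamma> > 0" "\<delta> > 0" "\<beta> \<ge> 0"
    and init: "x 0 = x 1" "l 0 = l 1"
    and x_update:
      "(\<forall>k\<ge>1. \<forall>y. sub_obj f A b \<beta> \<gamma> \<delta> (extrap t x k) (p_k t \<eta> l k) (c_k t \<eta> k) (r_k t \<eta> A b x k) (x (Suc k))
                 \<le> sub_obj f A b \<beta> \<gamma> \<delta> (extrap t x k) (p_k t \<eta> l k) (c_k t \<eta> k) (r_k t \<eta> A b x k) y)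
       \<or> (\<exists>L>0. (\<forall>u v. norm (g u - g v) \<le> L * norm (u - v)) \<and> \<gamma> \<le> 1 / L \<and>
          (\<forall>k\<ge>1. \<forall>y.
             sub_obj (\<lambda>z. g (extrap t x k) \<bullet> z) A b \<beta> \<gamma> \<delta> (extrap t x k) (p_k t \<eta> l k) (c_k t \<eta> k) (r_k t \<eta> A b x k) (x (Suc k))
             \<le> sub_obj (\<lambda>z. g (extrap t x k) \<bullet> z) A b \<beta> \<gamma> \<delta> (extrap t x k) (p_k t \<eta> l k) (c_k t \<eta> k) (r_k t \<eta> A b x k) y))"
    and l_update: "\<And>k. k \<ge> 1 \<Longrightarrow>
       l (Suc k) = extrap t l k + \<delta> *\<^sub>R (c_k t \<eta> k *\<^sub>R (A *v x (Suc k)) - r_k t \<eta> A b x k)"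
    and sol: "(xs, ls) \<in> KKT_set g A b"
  shows
    "summable (\<lambda>k. (\<eta> - \<rho>) * t (k + 2) * (aug_lag f A b \<beta> (x (k + 1)) ls - aug_lag f A b \<beta> xs ls))
     \<and> summable (\<lambda>k. (1 - \<eta>) * t (k + 2) * (M_norm \<gamma> \<delta> (x (k + 2) - x (k + 1)) (l (k + 2) - l (k + 1)))\<^sup>2)
     \<and> (let E1 = aug_lag f A b \<beta> (x 1) ls - aug_lag f A b \<beta> xs ls
               + \<eta> / (2 * \<gamma>) * (norm (x 1 - xs))\<^sup>2 + \<eta> / (2 * \<delta>) * (norm (l 1 - ls))\<^sup>2 in
          (\<forall>k\<ge>1. aug_lag f A b \<beta> (x k) ls - aug_lag f A b \<beta> xs ls \<le> E1 / (t k)\<^sup>2)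
        \<and> bounded (range (\<lambda>k. (x k, l k)))
        \<and> (\<forall>k>1. t k > 1 \<longrightarrow>
              M_norm \<gamma> \<delta> (x k - x (k - 1)) (l k - l (k - 1)) \<le> 2 * sqrt (2 * E1) / (t k - 1))
        \<and> (\<exists>C>0. \<forall>k\<ge>1. norm (A *v x k - b) \<le> C / (t k)\<^sup>2
              \<and> \<bar>f (x k) - f xs\<bar> \<le> (E1 + norm ls * C + \<beta> * C\<^sup>2 / 2) / (t k)\<^sup>2))"
proof -
  have eta_pos: "\<eta> > 0" using rho eta by linarith
  have tge1: "\<And>k. k \<ge> 1 \<Longrightarrow> t k \<ge> 1" using t_ge1[of t, OF t1 t_mono] by blast
  have KKT: "A *v xs = b" "g xs + transpose A *v ls = 0" using sol by (auto simp: KKT_set_def)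
  define P where "P = phi f A b \<beta> xs ls"
  have P_nonneg: "\<And>y. P y \<ge> 0"
  proof -
    fix y
    have g1: "f xs + inner (g xs) (y - xs) \<le> f y" by (rule grad_ineq[OF f_convex f_grad])
    have g2: "inner (g xs) (y - xs) = - inner ls (A *v y - b)"
    proof -
      have "g xs = - (transpose A *v ls)" using KKT(2) by (simp add: eq_neg_iff_add_eq_0)
      then have "inner (g xs) (y - xs) = - inner (ls v* A) (y - xs)" by simp
      also have "\<dots> = - inner ls (A *v (y - xs))" by (simp add: dot_lmul_matrix)
      also have "\<dots> = - inner ls (A *v y - b)" using KKT(1) by (simp add: matrix_vector_mult_diff_distrib)
      finally show ?thesis .
    qed
    have "0 \<le> \<beta> / 2 * (norm (A *v y - b))\<^sup>2" using params(3) by simp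
    then show "P y \<ge> 0" using g1 g2 unfolding P_def phi_def by linarith
  qed
  have aug_P: "\<And>y. aug_lag f A b \<beta> y ls - aug_lag f A b \<beta> xs ls = P y"
    unfolding aug_lag_def P_def phi_def using KKT(1) by simp
  define E where "E k = (t k)\<^sup>2 * P (x k) + (PP \<eta> (t k) xs (x k) (x (k - 1)) / \<gamma> + PP \<eta> (t k) ls (l k) (l (k - 1)) / \<delta>) / 2" for k
  have STEP: "E (Suc k) + (\<eta> - \<rho>) * t (Suc k) * P (x k)
      + (1 - \<eta>) * t (Suc k) / 2 * ((norm (x (Suc k) - x k))\<^sup>2 / \<gamma> + (norm (l (Suc k) - l k))\<^sup>2 / \<delta>) \<le> E k"
    if k: "k \<ge> 1" for k
  proof -
    let ?xb = "extrap t x k" and ?p = "p_k t \<eta> l k" and ?c = "c_k t \<eta> k" and ?r = "r_k t \<eta> A b x k"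
    let ?T = "t (Suc k)"
    have cases: "(\<forall>y. sub_obj f A b \<beta> \<gamma> \<delta> ?xb ?p ?c ?r (x (Suc k)) \<le> sub_obj f A b \<beta> \<gamma> \<delta> ?xb ?p ?c ?r y)
       \<or> (\<exists>L>0. (\<forall>u v. norm (g u - g v) \<le> L * norm (u - v)) \<and> \<gamma> \<le> 1 / L \<and>
          (\<forall>y. sub_obj (\<lambda>z. g ?xb \<bullet> z) A b \<beta> \<gamma> \<delta> ?xb ?p ?c ?r (x (Suc k)) \<le> sub_obj (\<lambda>z. g ?xb \<bullet> z) A b \<beta> \<gamma> \<delta> ?xb ?p ?c ?r y))"
      using x_update k by blast
    note tp = tpu[OF f_convex f_grad params(3) params(1) cases]
    have lu: "l (Suc k) = extrap t l k + \<delta> *\<^sub>R (?c *\<^sub>R (A *v x (Suc k)) - ?r)" using l_update[OF k] .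
    have mu: "?p + (\<delta> * ?c) *\<^sub>R (?c *\<^sub>R (A *v x (Suc k)) - ?r) = (?T / \<eta>) *\<^sub>R l (Suc k) - ((?T - \<eta>) / \<eta>) *\<^sub>R l k"
      unfolding lu by (simp add: p_k_def c_k_def alpha_k_def algebra_simps)
    have xbd: "?xb = x k + ((t k - 1) / ?T) *\<^sub>R (x k - x (k - 1))" by (simp add: extrap_def)
    have lpd: "l (Suc k) - (l k + ((t k - 1) / ?T) *\<^sub>R (l k - l (k - 1)))
        = \<delta> *\<^sub>R ((?T / \<eta>) *\<^sub>R (A *v x (Suc k)) - (((?T - \<eta>) / \<eta>) *\<^sub>R (A *v x k) + b))"
      unfolding lu by (simp add: extrap_def c_k_def r_k_def alpha_k_def)
    have T1: "?T \<ge> 1" using tge1[of "Suc k"] by simp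
    have rate: "?T\<^sup>2 - (t k)\<^sup>2 \<le> \<rho> * ?T" using t_rate[OF k] .
    have "?T\<^sup>2 * phi f A b \<beta> xs ls (x (Suc k)) + (PP \<eta> ?T xs (x (Suc k)) (x k) / \<gamma> + PP \<eta> ?T ls (l (Suc k)) (l k) / \<delta>) / 2
     + (\<eta> - \<rho>) * ?T * phi f A b \<beta> xs ls (x k) + (1 - \<eta>) * ?T / 2 * ((norm (x (Suc k) - x k))\<^sup>2 / \<gamma> + (norm (l (Suc k) - l k))\<^sup>2 / \<delta>)
     \<le> (t k)\<^sup>2 * phi f A b \<beta> xs ls (x k) + (PP \<eta> (t k) xs (x k) (x (k - 1)) / \<gamma> + PP \<eta> (t k) ls (l k) (l (k - 1)) / \<delta>) / 2"
      by (rule step[OF tp mu xbd lpd KKT(1) P_nonneg[unfolded P_def] T1 rate eta(1) eta(2) eta_pos params(1) params(2)])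
    then show ?thesis unfolding E_def P_def by simp
  qed
  define s where "s k = (\<eta> - \<rho>) * t (Suc k) * P (x k)
      + (1 - \<eta>) * t (Suc k) / 2 * ((norm (x (Suc k) - x k))\<^sup>2 / \<gamma> + (norm (l (Suc k) - l k))\<^sup>2 / \<delta>)" for k
  have s_nonneg: "s k \<ge> 0" if "k \<ge> 1" for k
  proof -
    have T0: "t (Suc k) \<ge> 0" using tge1[of "Suc k"] by simp
    have "(\<eta> - \<rho>) * t (Suc k) * P (x k) \<ge> 0" using eta T0 P_nonneg by simp
    moreover have "(1 - \<eta>) * t (Suc k) / 2 * ((norm (x (Suc k) - x k))\<^sup>2 / \<gamma> + (norm (l (Suc k) - l k))\<^sup>2 / \<delta>) \<ge> 0"
      using eta T0 params by simp
    ultimately show ?thesis unfolding s_def by linarith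
  qed
  have STEP': "E (Suc k) + s k \<le> E k" if "k \<ge> 1" for k using STEP[OF that] unfolding s_def by linarith
  have PPn: "PP \<eta> tt zs z zm \<ge> 0" for tt and zs z zm :: "real^'n"
    by (rule PP_nonneg) (use eta eta_pos in auto)
  have PPm: "PP \<eta> tt zs z zm \<ge> 0" for tt and zs z zm :: "real^'m"
    by (rule PP_nonneg) (use eta eta_pos in auto)
  have E_nonneg: "E k \<ge> 0" for k
    unfolding E_def using P_nonneg PPn PPm params by (simp add: add_nonneg_nonneg)
  have E_le: "E k \<le> E 1" if "k \<ge> 1" for k
    using that
  proof (induction k rule: dec_induct)
    case base then show ?case by simp
  next
    case (step k) then show ?case using STEP'[of k] s_nonneg[of k] by linarith
  qed
  have psum: "(\<Sum>i<N. s (Suc i)) \<le> E 1 - E (Suc N)" for N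
  proof (induction N)
    case 0 then show ?case by simp
  next
    case (Suc N) then show ?case using STEP'[of "Suc N"] by simp
  qed
  define E1 where "E1 = aug_lag f A b \<beta> (x 1) ls - aug_lag f A b \<beta> xs ls
               + \<eta> / (2 * \<gamma>) * (norm (x 1 - xs))\<^sup>2 + \<eta> / (2 * \<delta>) * (norm (l 1 - ls))\<^sup>2"
  have E1eq: "E 1 = E1"
  proof -
    show ?thesis unfolding E_def E1_def aug_P t1 PP_one by (simp add: norm_minus_commute field_simps)
  qed
  have part1: "summable (\<lambda>k. (\<eta> - \<rho>) * t (k + 2) * (aug_lag f A b \<beta> (x (k + 1)) ls - aug_lag f A b \<beta> xs ls))"
  proof (rule summableI_nonneg_bounded[where x = "E 1"])
    fix n
    have "(\<eta> - \<rho>) * t (k + 2) * (aug_lag f A b \<beta> (x (k + 1)) ls - aug_lag f A b \<beta> xs ls) \<le> s (Suc k)" for k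
      unfolding aug_P s_def using eta params tge1[of "Suc (Suc k)"] by (simp add: eval_nat_numeral)
    then have "(\<Sum>k<n. (\<eta> - \<rho>) * t (k + 2) * (aug_lag f A b \<beta> (x (k + 1)) ls - aug_lag f A b \<beta> xs ls)) \<le> (\<Sum>k<n. s (Suc k))"
      by (intro sum_mono) auto
    then show "(\<Sum>k<n. (\<eta> - \<rho>) * t (k + 2) * (aug_lag f A b \<beta> (x (k + 1)) ls - aug_lag f A b \<beta> xs ls)) \<le> E 1"
      using psum[of n] E_nonneg[of "Suc n"] by linarith
  next
    fix n show "0 \<le> (\<eta> - \<rho>) * t (n + 2) * (aug_lag f A b \<beta> (x (n + 1)) ls - aug_lag f A b \<beta> xs ls)"
      unfolding aug_P using eta P_nonneg tge1[of "n + 2"] by simp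
  qed
  have Mn2: "(M_norm \<gamma> \<delta> a c)\<^sup>2 = (norm a)\<^sup>2 / \<gamma> + (norm c)\<^sup>2 / \<delta>" for a :: "real^'n" and c :: "real^'m"
    unfolding M_norm_def using params by (simp add: divide_inverse mult.commute)
  have part2: "summable (\<lambda>k. (1 - \<eta>) * t (k + 2) * (M_norm \<gamma> \<delta> (x (k + 2) - x (k + 1)) (l (k + 2) - l (k + 1)))\<^sup>2)"
  proof (rule summableI_nonneg_bounded[where x = "2 * E 1"])
    fix n
    have "(1 - \<eta>) * t (k + 2) * (M_norm \<gamma> \<delta> (x (k + 2) - x (k + 1)) (l (k + 2) - l (k + 1)))\<^sup>2 \<le> 2 * s (Suc k)" for k
    proof -
      have "(\<eta> - \<rho>) * t (Suc (Suc k)) * P (x (Suc k)) \<ge> 0" using eta P_nonneg tge1[of "Suc (Suc k)"] by simp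
      then show ?thesis unfolding Mn2 s_def by (simp add: eval_nat_numeral)
    qed
    then have "(\<Sum>k<n. (1 - \<eta>) * t (k + 2) * (M_norm \<gamma> \<delta> (x (k + 2) - x (k + 1)) (l (k + 2) - l (k + 1)))\<^sup>2) \<le> (\<Sum>k<n. 2 * s (Suc k))"
      by (intro sum_mono) auto
    then show "(\<Sum>k<n. (1 - \<eta>) * t (k + 2) * (M_norm \<gamma> \<delta> (x (k + 2) - x (k + 1)) (l (k + 2) - l (k + 1)))\<^sup>2) \<le> 2 * E 1"
      using psum[of n] E_nonneg[of "Suc n"] by (simp add: sum_distrib_left[symmetric])
  next
    fix n show "0 \<le> (1 - \<eta>) * t (n + 2) * (M_norm \<gamma> \<delta> (x (n + 2) - x (n + 1)) (l (n + 2) - l (n + 1)))\<^sup>2"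
      using eta tge1[of "n + 2"] by simp
  qed
  have part_ii: "\<forall>k\<ge>1. aug_lag f A b \<beta> (x k) ls - aug_lag f A b \<beta> xs ls \<le> E1 / (t k)\<^sup>2"
  proof (intro allI impI)
    fix k :: nat assume k: "k \<ge> 1"
    have tk: "(t k)\<^sup>2 > 0" using tge1[OF k] by simp
    have "(t k)\<^sup>2 * P (x k) \<le> E k" unfolding E_def using PPn PPm params by (simp add: add_nonneg_nonneg)
    also have "\<dots> \<le> E1" using E_le[OF k] E1eq by simp
    finally show "aug_lag f A b \<beta> (x k) ls - aug_lag f A b \<beta> xs ls \<le> E1 / (t k)\<^sup>2"
      unfolding aug_P using tk by (simp add: pos_le_divide_eq mult.commute)
  qed
  define Z where "Z k = scl \<gamma> \<delta> (x k) (l k)" for k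
  define Zs where "Zs = scl \<gamma> \<delta> xs ls"
  define PZ where "PZ k = \<eta> *\<^sub>R (Z k - Zs) + (t k - 1) *\<^sub>R (Z k - Z (k - 1))" for k
  define Cz where "Cz = sqrt (2 * E1)"
  have E1_nonneg: "E1 \<ge> 0" using E_nonneg[of 1] E1eq by simp
  have PZ_bd: "norm (PZ k) \<le> Cz" if k: "k \<ge> 1" for k
  proof -
    have "(norm (PZ k))\<^sup>2 \<le> PP \<eta> (t k) Zs (Z k) (Z (k - 1))"
      unfolding PP_def PZ_def using eta eta_pos by simp
    also have "\<dots> = PP \<eta> (t k) xs (x k) (x (k - 1)) / \<gamma> + PP \<eta> (t k) ls (l k) (l (k - 1)) / \<delta>"
      unfolding Z_def Zs_def using PP_scl params by blast
    also have "\<dots> \<le> 2 * E k"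
    proof -
      have "2 * E k = 2 * ((t k)\<^sup>2 * P (x k)) + (PP \<eta> (t k) xs (x k) (x (k - 1)) / \<gamma> + PP \<eta> (t k) ls (l k) (l (k - 1)) / \<delta>)"
        unfolding E_def by (simp add: algebra_simps)
      moreover have "(t k)\<^sup>2 * P (x k) \<ge> 0" using P_nonneg[of "x k"] by simp
      ultimately show ?thesis by linarith
    qed
    also have "\<dots> \<le> 2 * E1" using E_le[OF k] E1eq by simp
    finally show ?thesis unfolding Cz_def by (rule real_le_rsqrt)
  qed
  have eZ: "norm (Z k - Zs) \<le> Cz / \<eta>" if k: "k \<ge> 1" for k
    using k
  proof (induction k rule: dec_induct)
    case base
    have "PZ 1 = \<eta> *\<^sub>R (Z 1 - Zs)" unfolding PZ_def t1 by simp
    then have "\<eta> * norm (Z 1 - Zs) \<le> Cz" using PZ_bd[of 1] eta_pos by simp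
    then show ?case using eta_pos by (simp add: field_simps)
  next
    case (step k)
    define T where "T = t (Suc k)"
    have T1: "T \<ge> 1" unfolding T_def using tge1[of "Suc k"] by simp
    have "(T - 1 + \<eta>) *\<^sub>R (Z (Suc k) - Zs) = PZ (Suc k) + (T - 1) *\<^sub>R (Z k - Zs)"
      unfolding PZ_def T_def by (simp add: algebra_simps)
    then have "(T - 1 + \<eta>) * norm (Z (Suc k) - Zs) = norm (PZ (Suc k) + (T - 1) *\<^sub>R (Z k - Zs))"
      using T1 eta_pos by (metis abs_of_nonneg add_increasing2 norm_scaleR diff_ge_0_iff_ge less_imp_le)
    also have "\<dots> \<le> norm (PZ (Suc k)) + norm ((T - 1) *\<^sub>R (Z k - Zs))" by (rule norm_triangle_ineq)
    also have "\<dots> = norm (PZ (Suc k)) + (T - 1) * norm (Z k - Zs)" using T1 by simp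
    also have "\<dots> \<le> Cz + (T - 1) * (Cz / \<eta>)"
      using PZ_bd[of "Suc k"] step.IH T1 by (intro add_mono mult_left_mono) auto
    also have "\<dots> = (T - 1 + \<eta>) * (Cz / \<eta>)" using eta_pos by (simp add: field_simps)
    finally have "(T - 1 + \<eta>) * norm (Z (Suc k) - Zs) \<le> (T - 1 + \<eta>) * (Cz / \<eta>)" .
    moreover have "T - 1 + \<eta> > 0" using T1 eta_pos by simp
    ultimately show ?case by (rule mult_left_le_imp_le)
  qed
  have dZ: "(t k - 1) * norm (Z k - Z (k - 1)) \<le> 2 * Cz" if k: "k \<ge> 1" for k
  proof -
    have "(t k - 1) *\<^sub>R (Z k - Z (k - 1)) = PZ k - \<eta> *\<^sub>R (Z k - Zs)" unfolding PZ_def by simp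
    then have "(t k - 1) * norm (Z k - Z (k - 1)) = norm (PZ k - \<eta> *\<^sub>R (Z k - Zs))"
      using tge1[OF k] by (metis abs_of_nonneg diff_ge_0_iff_ge norm_scaleR)
    also have "\<dots> \<le> norm (PZ k) + norm (\<eta> *\<^sub>R (Z k - Zs))" by (rule norm_triangle_ineq4)
    also have "\<dots> = norm (PZ k) + \<eta> * norm (Z k - Zs)" using eta_pos by simp
    also have "\<dots> \<le> Cz + \<eta> * (Cz / \<eta>)"
      using PZ_bd[OF k] eZ[OF k] eta_pos by (intro add_mono mult_left_mono) auto
    also have "\<dots> = 2 * Cz" using eta_pos by simp
    finally show ?thesis .
  qed
  have part_iii: "\<forall>k>1. t k > 1 \<longrightarrow> M_norm \<gamma> \<delta> (x k - x (k - 1)) (l k - l (k - 1)) \<le> 2 * sqrt (2 * E1) / (t k - 1)"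
  proof (intro allI impI)
    fix k :: nat assume k: "k > 1" and tk: "t k > 1"
    have "M_norm \<gamma> \<delta> (x k - x (k - 1)) (l k - l (k - 1)) = norm (Z k - Z (k - 1))"
      unfolding M_norm_scl[OF params(1,2)] Z_def scl_lin(2) ..
    moreover have "(t k - 1) * norm (Z k - Z (k - 1)) \<le> 2 * Cz" using dZ k by simp
    ultimately show "M_norm \<gamma> \<delta> (x k - x (k - 1)) (l k - l (k - 1)) \<le> 2 * sqrt (2 * E1) / (t k - 1)"
      using tk unfolding Cz_def by (simp add: pos_le_divide_eq mult.commute)
  qed
  have eZall: "norm (Z k - Zs) \<le> Cz / \<eta>" for k
  proof (cases "k = 0")
    case True
    have "Z 0 = Z 1" unfolding Z_def using init by simp
    then show ?thesis using True eZ[of 1] by simp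
  next
    case False then show ?thesis using eZ[of k] by simp
  qed
  have comp: "norm (x k - xs) \<le> sqrt \<gamma> * (Cz / \<eta>) \<and> norm (l k - ls) \<le> sqrt \<delta> * (Cz / \<eta>)" for k
  proof -
    have ZZ: "Z k - Zs = ((1 / sqrt \<gamma>) *\<^sub>R (x k - xs), (1 / sqrt \<delta>) *\<^sub>R (l k - ls))"
      unfolding Z_def Zs_def scl_def by (simp add: algebra_simps)
    have a: "norm (x k - xs) / sqrt \<gamma> \<le> Cz / \<eta>"
      using norm_fst_le[of "(1 / sqrt \<gamma>) *\<^sub>R (x k - xs)" "(1 / sqrt \<delta>) *\<^sub>R (l k - ls)"] eZall[of k] params
      unfolding ZZ by simp
    have b: "norm (l k - ls) / sqrt \<delta> \<le> Cz / \<eta>"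
      using norm_snd_le[of "(1 / sqrt \<delta>) *\<^sub>R (l k - ls)" "(1 / sqrt \<gamma>) *\<^sub>R (x k - xs)"] eZall[of k] params
      unfolding ZZ by simp
    show ?thesis using a b params by (simp add: pos_divide_le_eq mult.commute)
  qed
  have part_bdd: "bounded (range (\<lambda>k. (x k, l k)))"
    unfolding bounded_iff
  proof (intro exI ballI)
    fix z assume "z \<in> range (\<lambda>k. (x k, l k))"
    then obtain k where z: "z = (x k, l k)" by blast
    have "norm z \<le> norm (x k) + norm (l k)" unfolding z by (rule norm_Pair_le)
    also have "\<dots> \<le> (norm xs + sqrt \<gamma> * (Cz / \<eta>)) + (norm ls + sqrt \<delta> * (Cz / \<eta>))"
      using comp[of k] norm_triangle_sub[of "x k" xs] norm_triangle_sub[of "l k" ls] by linarith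
    finally show "norm z \<le> (norm xs + sqrt \<gamma> * (Cz / \<eta>)) + (norm ls + sqrt \<delta> * (Cz / \<eta>))" .
  qed
  define sr where "sr k = A *v x k - b" for k
  define Y where "Y k = (t k - 1) *\<^sub>R (l k - l (k - 1)) + l k" for k
  define \<kappa> where "\<kappa> = \<eta> / \<delta>"
  define BY where "BY = sqrt \<delta> * (2 * Cz) + (norm ls + sqrt \<delta> * (Cz / \<eta>))"
  have kpos: "\<kappa> > 0" unfolding \<kappa>_def using eta_pos params by simp
  have Y_bd: "norm (Y k) \<le> BY" if k: "k \<ge> 1" for k
  proof -
    have ZZ: "Z k - Z (k - 1) = ((1 / sqrt \<gamma>) *\<^sub>R (x k - x (k - 1)), (1 / sqrt \<delta>) *\<^sub>R (l k - l (k - 1)))"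
      unfolding Z_def scl_def by (simp add: algebra_simps)
    have "norm (l k - l (k - 1)) / sqrt \<delta> \<le> norm (Z k - Z (k - 1))"
      using norm_snd_le[of "(1 / sqrt \<delta>) *\<^sub>R (l k - l (k - 1))" "(1 / sqrt \<gamma>) *\<^sub>R (x k - x (k - 1))"] params
      unfolding ZZ by simp
    then have "norm (l k - l (k - 1)) \<le> sqrt \<delta> * norm (Z k - Z (k - 1))"
      using params by (simp add: pos_divide_le_eq mult.commute)
    then have "(t k - 1) * norm (l k - l (k - 1)) \<le> sqrt \<delta> * ((t k - 1) * norm (Z k - Z (k - 1)))"
      using tge1[OF k] by (metis diff_ge_0_iff_ge mult.left_commute mult_left_mono)
    also have "\<dots> \<le> sqrt \<delta> * (2 * Cz)" using dZ[OF k] params by (intro mult_left_mono) auto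
    finally have a: "norm ((t k - 1) *\<^sub>R (l k - l (k - 1))) \<le> sqrt \<delta> * (2 * Cz)"
      using tge1[OF k] by simp
    have b: "norm (l k) \<le> norm ls + sqrt \<delta> * (Cz / \<eta>)"
      using comp[of k] norm_triangle_sub[of "l k" ls] by linarith
    show ?thesis unfolding Y_def BY_def using norm_triangle_ineq[of "(t k - 1) *\<^sub>R (l k - l (k - 1))" "l k"] a b
      by linarith
  qed
  have LPD: "l (Suc k) - (l k + ((t k - 1) / t (Suc k)) *\<^sub>R (l k - l (k - 1)))
        = \<delta> *\<^sub>R ((t (Suc k) / \<eta>) *\<^sub>R (A *v x (Suc k)) - (((t (Suc k) - \<eta>) / \<eta>) *\<^sub>R (A *v x k) + b))"
    if k: "k \<ge> 1" for k
    using l_update[OF k] by (simp add: extrap_def c_k_def r_k_def alpha_k_def)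
  define a where "a k = (t k)\<^sup>2 *\<^sub>R sr k" for k
  define bb where "bb k = a k - \<kappa> *\<^sub>R Y k" for k
  define Bb where "Bb = max (norm (bb 1)) (\<kappa> * BY)"
  have bb_bd: "norm (bb k) \<le> Bb" if k: "k \<ge> 1" for k
    using k
  proof (induction k rule: dec_induct)
    case base then show ?case unfolding Bb_def by simp
  next
    case (step k)
    define T where "T = t (Suc k)"
    define q where "q = (T\<^sup>2 - \<eta> * T) / (t k)\<^sup>2"
    have tk: "(t k)\<^sup>2 > 0" using tge1[OF step.hyps(1)] by simp
    have T1: "T \<ge> 1" unfolding T_def using tge1[of "Suc k"] by simp
    have q0: "q \<ge> 0" unfolding q_def using T1 eta tk by (simp add: power2_eq_square mult_right_mono)
    have q1: "q \<le> 1"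
    proof -
      have "T\<^sup>2 - \<eta> * T \<le> (t k)\<^sup>2" using t_rate[OF step.hyps(1)] eta T1 unfolding T_def
        by (smt (verit) mult_right_mono)
      then show ?thesis unfolding q_def using tk by simp
    qed
    have rec: "a (Suc k) = q *\<^sub>R a k + \<kappa> *\<^sub>R (Y (Suc k) - Y k)"
    proof -
      have r1: "T\<^sup>2 *\<^sub>R sr (Suc k) = (T\<^sup>2 - \<eta> * T) *\<^sub>R sr k + \<kappa> *\<^sub>R (Y (Suc k) - Y k)"
        unfolding sr_def Y_def \<kappa>_def T_def
        using resid_rec[OF LPD[OF step.hyps(1)]] T1 eta_pos params by (simp add: T_def)
      have r2: "q *\<^sub>R a k = (T\<^sup>2 - \<eta> * T) *\<^sub>R sr k" unfolding q_def a_def using tk by simp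
      have "a (Suc k) = T\<^sup>2 *\<^sub>R sr (Suc k)" unfolding a_def T_def ..
      also have "\<dots> = q *\<^sub>R a k + \<kappa> *\<^sub>R (Y (Suc k) - Y k)" unfolding r1 r2 ..
      finally show ?thesis .
    qed
    have e: "bb (Suc k) = q *\<^sub>R bb k + (q - 1) *\<^sub>R (\<kappa> *\<^sub>R Y k)"
      unfolding bb_def rec by (simp add: algebra_simps)
    have n0: "norm (bb (Suc k)) \<le> norm (q *\<^sub>R bb k) + norm ((q - 1) *\<^sub>R (\<kappa> *\<^sub>R Y k))"
      unfolding e by (rule norm_triangle_ineq)
    have n1: "norm (q *\<^sub>R bb k) = q * norm (bb k)" using q0 by simp
    have n2: "norm ((q - 1) *\<^sub>R (\<kappa> *\<^sub>R Y k)) = (1 - q) * (\<kappa> * norm (Y k))"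
    proof -
      have "\<bar>q - 1\<bar> = 1 - q" using q1 by simp
      then show ?thesis by (simp only: norm_scaleR abs_of_pos[OF kpos])
    qed
    have "norm (bb (Suc k)) \<le> q * norm (bb k) + (1 - q) * (\<kappa> * norm (Y k))"
      using n0 n1 n2 by linarith
    also have "\<dots> \<le> q * Bb + (1 - q) * Bb"
    proof (intro add_mono mult_left_mono)
      show "norm (bb k) \<le> Bb" by (rule step.IH)
      have "\<kappa> * norm (Y k) \<le> \<kappa> * BY" using Y_bd[OF step.hyps(1)] kpos by simp
      then show "\<kappa> * norm (Y k) \<le> Bb" unfolding Bb_def by simp
    qed (use q0 q1 in auto)
    also have "\<dots> = Bb" by (simp add: algebra_simps)
    finally show ?case .
  qed
  define C where "C = Bb + \<kappa> * BY + 1"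
  have Bb0: "Bb \<ge> 0" unfolding Bb_def by (metis max.coboundedI1 norm_ge_zero)
  have BY0: "BY \<ge> 0" unfolding BY_def using params Cz_def E1_nonneg eta_pos by simp
  have Cpos: "C > 0" unfolding C_def using Bb0 mult_nonneg_nonneg[of \<kappa> BY] BY0 kpos by linarith
  have res_bd: "norm (sr k) \<le> C / (t k)\<^sup>2" if k: "k \<ge> 1" for k
  proof -
    have tk: "(t k)\<^sup>2 > 0" using tge1[OF k] by simp
    have "norm (a k) \<le> norm (bb k) + norm (\<kappa> *\<^sub>R Y k)"
      unfolding bb_def using norm_triangle_ineq[of "a k - \<kappa> *\<^sub>R Y k" "\<kappa> *\<^sub>R Y k"] by simp
    also have "\<dots> \<le> Bb + \<kappa> * BY"
    proof -
      have "norm (\<kappa> *\<^sub>R Y k) = \<kappa> * norm (Y k)" using kpos by simp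
      then show ?thesis using bb_bd[OF k] mult_left_mono[OF Y_bd[OF k] less_imp_le[OF kpos]] by linarith
    qed
    also have "\<dots> \<le> C" unfolding C_def by simp
    finally have "(t k)\<^sup>2 * norm (sr k) \<le> C" unfolding a_def by simp
    then show ?thesis using tk by (simp add: pos_le_divide_eq mult.commute)
  qed
  have part_iv: "\<exists>C>0. \<forall>k\<ge>1. norm (A *v x k - b) \<le> C / (t k)\<^sup>2
              \<and> \<bar>f (x k) - f xs\<bar> \<le> (E1 + norm ls * C + \<beta> * C\<^sup>2 / 2) / (t k)\<^sup>2"
  proof (intro exI conjI allI impI)
    show "C > 0" by (rule Cpos)
    fix k :: nat assume k: "k \<ge> 1"
    show r: "norm (A *v x k - b) \<le> C / (t k)\<^sup>2" using res_bd[OF k] unfolding sr_def .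
    define u where "u = 1 / (t k)\<^sup>2"
    have u0: "u > 0" and u1: "u \<le> 1" unfolding u_def using tge1[OF k] by (auto simp: power_le_one_iff)
    have rn: "norm (sr k) \<le> C * u" using res_bd[OF k] unfolding u_def by simp
    have ph: "P (x k) \<le> E1 * u" using part_ii k aug_P unfolding u_def by simp
    have phE: "P (x k) = f (x k) - f xs + inner ls (sr k) + \<beta> / 2 * (norm (sr k))\<^sup>2"
      unfolding P_def phi_def sr_def ..
    have i1: "\<bar>inner ls (sr k)\<bar> \<le> norm ls * (C * u)"
      using Cauchy_Schwarz_ineq2[of ls "sr k"] rn by (meson mult_left_mono norm_ge_zero order_trans)
    have i2: "(norm (sr k))\<^sup>2 \<le> C\<^sup>2 * u"
    proof -
      have "(norm (sr k))\<^sup>2 \<le> (C * u)\<^sup>2" using rn by (simp add: power_mono)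
      also have "\<dots> = C\<^sup>2 * u * u" by (simp add: power2_eq_square)
      also have "\<dots> \<le> C\<^sup>2 * u" using u0 u1 by (simp add: mult_left_le)
      finally show ?thesis .
    qed
    have i3: "0 \<le> \<beta> / 2 * (norm (sr k))\<^sup>2" "\<beta> / 2 * (norm (sr k))\<^sup>2 \<le> \<beta> / 2 * (C\<^sup>2 * u)"
      using i2 params by (auto intro: mult_left_mono)
    have "\<bar>f (x k) - f xs\<bar> \<le> E1 * u + norm ls * (C * u) + \<beta> / 2 * (C\<^sup>2 * u)"
    proof -
      have nn2: "0 \<le> \<beta> / 2 * (C\<^sup>2 * u)" using params u0 by simp
      have nn3: "0 \<le> E1 * u" using E1_nonneg u0 by simp
      have i1a: "inner ls (sr k) \<le> norm ls * (C * u)" "- inner ls (sr k) \<le> norm ls * (C * u)"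
        using i1 by (auto simp: abs_le_iff)
      have up: "f (x k) - f xs \<le> E1 * u + norm ls * (C * u) + \<beta> / 2 * (C\<^sup>2 * u)"
        using phE ph i1a i3 nn2 by linarith
      have lo: "- (f (x k) - f xs) \<le> E1 * u + norm ls * (C * u) + \<beta> / 2 * (C\<^sup>2 * u)"
        using phE P_nonneg[of "x k"] i1a i3 nn3 by linarith
      show ?thesis using up lo by (simp add: abs_le_iff)
    qed
    also have "\<dots> = (E1 + norm ls * C + \<beta> * C\<^sup>2 / 2) / (t k)\<^sup>2"
    proof -
      have "(t k)\<^sup>2 \<noteq> 0" using tge1[OF k] by simp
      then show ?thesis unfolding u_def by (simp add: field_simps)
    qed
    finally show "\<bar>f (x k) - f xs\<bar> \<le> (E1 + norm ls * C + \<beta> * C\<^sup>2 / 2) / (t k)\<^sup>2" .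
  qed
  show ?thesis
    using part1 part2 part_ii part_bdd part_iii part_iv unfolding E1_def[symmetric] Let_def by blast
qed

end
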